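(* For each arrival $t\ge1$ and each level $i\ge 0$, we have $\mathscr{C}^{(t-1)}_{i+1}\preceq\mathscr{C}^{(t)}_{{\rm inh},i}$.
   Context: An offline instance $(\mathcal{M},D)$ consists of demand pairs $D=\{(u_j,v_j)\}$ over a terminal set $V=\{u_j,v_j\}$, each terminal in exactly one pair (the other element of its pair is its mate), and a metric $\mathcal{M}$ on $V$ with all distances at least $1$, viewed as the complete graph on $V$ with edge costs equal to distances. A clustering of $V$ is a partition of $V$; $\mathcal{M}/\mathscr{C}$ denotes the shortest-path metric on $\mathscr{C}$ of the graph obtained from the complete weighted graph on $V$ by contracting each cluster of $\mathscr{C}$ into a single vertex. For clusterings $\mathscr{C}_1$ of $V_1$ and $\mathscr{C}_2$ of $V_2$, write $\mathscr{C}_1\preceq\mathscr{C}_2$ if every cluster of $\mathscr{C}_1$ is contained in some cluster of $\mathscr{C}_2$. Clustering procedure: ${\sf level}(v)=\lceil\log_2{\sf dist}_{\mathcal{M}}(v,\text{mate of }v)\rceil$, ${\sf level}(C)=\max_{v\in C}{\sf level}(v)$, $L=\max_v{\sf level}(v)$. $\mathscr{C}_0$ is the singleton clustering. For $i=0,\dots,L$: $C\in\mathscr{C}_i$ is $i$-active if ${\sf level}(C)\ge i$; $H_i$ has as vertices the $i$-active clusters of $\mathscr{C}_i$, with an edge between distinct $C_1,C_2$ iff ${\sf dist}_{\mathcal{M}/\mathscr{C}_i}(C_1,C_2)<2^{i+1}$; $\mathscr{C}_{i+1}$ consists of the non-$i$-active clusters of $\mathscr{C}_i$ together with, for each connected component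 of $H_i$, the union of its clusters. Online setting: pairs arrive in order; for $1\le t\le n$ the instance $(\mathcal{M}^{(t)},D^{(t)})$ consists of the first $t$ pairs and the metric restricted to their terminals. Running the procedure yields $L^{(t)},\mathscr{C}^{(t)}_i,H^{(t)}_i$; for $i\ge L^{(t)}+1$, $\mathscr{C}^{(t)}_i:=\mathscr{C}^{(t)}_{L^{(t)}+1}$ and $H^{(t)}_i$ is empty; for $t=0$ all $\mathscr{C}^{(0)}_i,H^{(0)}_i$ are empty. It holds that $\mathscr{C}^{(t-1)}_i\preceq\mathscr{C}^{(t)}_i$. Virtual forests are chosen recursively in $t$: $\hat F^{(0)}_i=\emptyset$. Given the spanning forest $\hat F^{(t-1)}_i$ of $H^{(t-1)}_i$, for each edge $(C_1,C_2)\in\hat F^{(t-1)}_i$ let $D_1,D_2$ be the clusters of $\mathscr{C}^{(t)}_i$ containing $C_1,C_2$; if $D_1\ne D_2$ then $(D_1,D_2)$ is an edge of $H^{(t)}_i$, called inherited. Let $\hat F^{(t)}_{{\rm inh},i}$ be an arbitrary spanning forest of the subgraph of $H^{(t)}_i$ formed by its inherited edges, and let $\hat F^{(t)}_i$ be an arbitrary spanning forest of $H^{(t)}_i$ containing $\hat F^{(t)}_{{\rm inh},i}$. Finally, $\mathscr{C}^{(t)}_{{\rm inh},i}$ is the clustering consisting of the non-$i$-active clusters of $\mathscr{C}^{(t)}_i$ together with, for each connected component of the graph with vertex set $V(H^{(t)}_i)$ and edge set $\hat F^{(t)}_{{\rm inh},i}$, the union of the clusters in that component. *)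

theory Defs
  imports Complex_Main
begin

definition terms :: "('a \<times> 'a) list \<Rightarrow> 'a set" where
  "terms qs = (\<Union>(u,v)\<in>set qs. {u, v})"

definition mate :: "('a \<times> 'a) list \<Rightarrow> 'a \<Rightarrow> 'a" where
  "mate qs v = (THE w. (v, w) \<in> set qs \<or> (w, v) \<in> set qs)"

definition lvl :: "('a \<Rightarrow> 'a \<Rightarrow> real) \<Rightarrow> ('a \<times> 'a) list \<Rightarrow> 'a \<Rightarrow> nat" where
  "lvl d qs v = nat \<lceil>log 2 (d v (mate qs v))\<rceil>"

definition clvl :: "('a \<Rightarrow> 'a \<Rightarrow> real) \<Rightarrow> ('a \<times> 'a) list \<Rightarrow> 'a set \<Rightarrow> nat" where
  "clvl d qs C = Max (lvl d qs ` C)"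

definition maxL :: "('a \<Rightarrow> 'a \<Rightarrow> real) \<Rightarrow> ('a \<times> 'a) list \<Rightarrow> nat" where
  "maxL d qs = Max (lvl d qs ` terms qs)"

text \<open>Weight of the (cheapest parallel) edge between two clusters after contraction.\<close>
definition edgew :: "('a \<Rightarrow> 'a \<Rightarrow> real) \<Rightarrow> 'a set \<Rightarrow> 'a set \<Rightarrow> real" where
  "edgew d X Y = Inf {d x y | x y. x \<in> X \<and> y \<in> Y}"

definition cdist :: "('a \<Rightarrow> 'a \<Rightarrow> real) \<Rightarrow> 'a set set \<Rightarrow> 'a set \<Rightarrow> 'a set \<Rightarrow> real" where
  "cdist d CC A B = Inf {sum_list (map (\<lambda>(X, Y). edgew d X Y) (zip xs (tl xs))) | xs.
       xs \<noteq> [] \<and> hd xs = A \<and> last xs = B \<and> set xs \<subseteq> CC}"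

definition hedge :: "('a \<Rightarrow> 'a \<Rightarrow> real) \<Rightarrow> ('a \<times> 'a) list \<Rightarrow> 'a set set \<Rightarrow> nat
    \<Rightarrow> 'a set \<Rightarrow> 'a set \<Rightarrow> bool" where
  "hedge d qs CC i C1 C2 \<longleftrightarrow> C1 \<in> CC \<and> C2 \<in> CC \<and> i \<le> clvl d qs C1 \<and> i \<le> clvl d qs C2
     \<and> C1 \<noteq> C2 \<and> cdist d CC C1 C2 < 2 ^ (Suc i)"

primrec clus :: "('a \<Rightarrow> 'a \<Rightarrow> real) \<Rightarrow> ('a \<times> 'a) list \<Rightarrow> nat \<Rightarrow> 'a set set" where
  "clus d qs 0 = (\<lambda>v. {v}) ` terms qs"
| "clus d qs (Suc i) =
     (if i \<le> maxL d qs then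
        {C \<in> clus d qs i. clvl d qs C < i}
        \<union> (\<lambda>C. \<Union>{D. (hedge d qs (clus d qs i) i)\<^sup>*\<^sup>* C D}) ` {C \<in> clus d qs i. i \<le> clvl d qs C}
      else clus d qs i)"

definition Hverts :: "('a \<Rightarrow> 'a \<Rightarrow> real) \<Rightarrow> ('a \<times> 'a) list \<Rightarrow> nat \<Rightarrow> 'a set set" where
  "Hverts d qs i = (if i \<le> maxL d qs then {C \<in> clus d qs i. i \<le> clvl d qs C} else {})"

definition Hedges :: "('a \<Rightarrow> 'a \<Rightarrow> real) \<Rightarrow> ('a \<times> 'a) list \<Rightarrow> nat \<Rightarrow> 'a set set set" where
  "Hedges d qs i = (if i \<le> maxL d qs then
      {{C1, C2} | C1 C2. hedge d qs (clus d qs i) i C1 C2} else {})"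

definition refines :: "'a set set \<Rightarrow> 'a set set \<Rightarrow> bool" where
  "refines C1 C2 \<longleftrightarrow> (\<forall>C\<in>C1. \<exists>D\<in>C2. C \<subseteq> D)"

definition econn :: "'v set set \<Rightarrow> 'v \<Rightarrow> 'v \<Rightarrow> bool" where
  "econn E = (\<lambda>x y. {x, y} \<in> E)\<^sup>*\<^sup>*"

definition is_cycle :: "'v set set \<Rightarrow> 'v list \<Rightarrow> bool" where
  "is_cycle F vs \<longleftrightarrow> length vs \<ge> 3 \<and> distinct vs \<and>
     (\<forall>k < length vs. {vs ! k, vs ! ((k + 1) mod length vs)} \<in> F)"

definition forest :: "'v set set \<Rightarrow> bool" where
  "forest F \<longleftrightarrow> \<not> (\<exists>vs. is_cycle F vs)"

definition spanning_forest :: "'v set \<Rightarrow> 'v set set \<Rightarrow> 'v set set \<Rightarrow> bool" where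
  "spanning_forest Vs E F \<longleftrightarrow> F \<subseteq> E \<and> forest F \<and>
     (\<forall>x\<in>Vs. \<forall>y\<in>Vs. econn E x y \<longrightarrow> econn F x y)"

definition inh :: "('a \<Rightarrow> 'a \<Rightarrow> real) \<Rightarrow> ('a \<times> 'a) list \<Rightarrow> nat \<Rightarrow> nat \<Rightarrow> 'a set set set
    \<Rightarrow> 'a set set set" where
  "inh d ps t i Fprev = {{D1, D2} | C1 C2 D1 D2. {C1, C2} \<in> Fprev
      \<and> D1 \<in> clus d (take t ps) i \<and> D2 \<in> clus d (take t ps) i
      \<and> C1 \<subseteq> D1 \<and> C2 \<subseteq> D2 \<and> D1 \<noteq> D2}"

definition cinh :: "('a \<Rightarrow> 'a \<Rightarrow> real) \<Rightarrow> ('a \<times> 'a) list \<Rightarrow> nat \<Rightarrow> nat \<Rightarrow> 'a set set set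
    \<Rightarrow> 'a set set" where
  "cinh d ps t i Finh =
     {C \<in> clus d (take t ps) i. clvl d (take t ps) C < i}
     \<union> (\<lambda>C. \<Union>{D \<in> Hverts d (take t ps) i. econn Finh C D}) ` Hverts d (take t ps) i"

end

theory Submission imports Defs begin
lemma terms_conv: "terms q = set (concat (map (\<lambda>(u,v). [u,v]) q))"
  unfolding terms_def by (induction q) auto
lemma finite_terms: "finite (terms q)"
  unfolding terms_def by (intro finite_UN_I) auto
lemma terms_take_mono: "m \<le> n \<Longrightarrow> terms (take m ps) \<subseteq> terms (take n ps)"
  unfolding terms_def using set_take_subset_set_take by (metis SUP_subset_mono order_refl)

lemma edgew_nonneg:
  assumes "X \<noteq> {}" "Y \<noteq> {}" "X \<subseteq> S" "Y \<subseteq> S" "\<forall>x\<in>S. \<forall>y\<in>S. 0 \<le> d x y"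
  shows "0 \<le> edgew d X Y"
  unfolding edgew_def using assms by (intro cInf_greatest) auto

lemma edgew_mono:
  assumes "X \<noteq> {}" "Y \<noteq> {}" "X \<subseteq> X'" "Y \<subseteq> Y'" "X' \<subseteq> S" "Y' \<subseteq> S" "\<forall>x\<in>S. \<forall>y\<in>S. 0 \<le> d x y"
  shows "edgew d X' Y' \<le> edgew d X Y"
  unfolding edgew_def
proof (rule cInf_superset_mono)
  show "{d x y |x y. x \<in> X \<and> y \<in> Y} \<noteq> {}" using assms by blast
  show "bdd_below {d x y |x y. x \<in> X' \<and> y \<in> Y'}" unfolding bdd_below_def using assms by blast
  show "{d x y |x y. x \<in> X \<and> y \<in> Y} \<subseteq> {d x y |x y. x \<in> X' \<and> y \<in> Y'}" using assms by blast
qed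

lemma sum_walk_mono:
  assumes "\<forall>X\<in>CC. f X \<in> CC' \<and> X \<subseteq> f X" "\<forall>X\<in>CC. X \<noteq> {}" "\<forall>Y\<in>CC'. Y \<noteq> {} \<and> Y \<subseteq> S"
    "\<forall>x\<in>S. \<forall>y\<in>S. 0 \<le> d x y"
  shows "set xs \<subseteq> CC \<Longrightarrow> sum_list (map (\<lambda>(X,Y). edgew d X Y) (zip (map f xs) (tl (map f xs))))
     \<le> sum_list (map (\<lambda>(X,Y). edgew d X Y) (zip xs (tl xs)))"
proof (induction xs rule: induct_list012)
  case (3 x y zs)
  have "edgew d (f x) (f y) \<le> edgew d x y"
    using 3(3) assms by (intro edgew_mono[where S=S]) auto
  with 3 show ?case by simp
qed auto

lemma sum_walk_nonneg:
  assumes "\<forall>Y\<in>CC'. Y \<noteq> {} \<and> Y \<subseteq> S" "\<forall>x\<in>S. \<forall>y\<in>S. 0 \<le> d x y"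
  shows "set xs \<subseteq> CC' \<Longrightarrow> 0 \<le> sum_list (map (\<lambda>(X,Y). edgew d X Y) (zip xs (tl xs)))"
proof (induction xs rule: induct_list012)
  case (3 x y zs)
  have "0 \<le> edgew d x y"
    using 3(3) assms by (intro edgew_nonneg[where S=S]) auto
  with 3 show ?case by simp
qed auto

lemma cdist_mono:
  assumes f: "\<forall>X\<in>CC. f X \<in> CC' \<and> X \<subseteq> f X" and ne: "\<forall>X\<in>CC. X \<noteq> {}"
    and C': "\<forall>Y\<in>CC'. Y \<noteq> {} \<and> Y \<subseteq> S"
    and nn: "\<forall>x\<in>S. \<forall>y\<in>S. 0 \<le> d x y" and AB: "A \<in> CC" "B \<in> CC"
  shows "cdist d CC' (f A) (f B) \<le> cdist d CC A B"
  unfolding cdist_def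
proof (rule cInf_greatest)
  show "{sum_list (map (\<lambda>(X, Y). edgew d X Y) (zip xs (tl xs))) |xs.
        xs \<noteq> [] \<and> hd xs = A \<and> last xs = B \<and> set xs \<subseteq> CC} \<noteq> {}"
    using AB by (auto intro!: exI[of _ "[A,B]"])
  fix s assume "s \<in> {sum_list (map (\<lambda>(X, Y). edgew d X Y) (zip xs (tl xs))) |xs.
        xs \<noteq> [] \<and> hd xs = A \<and> last xs = B \<and> set xs \<subseteq> CC}"
  then obtain xs where xs: "xs \<noteq> []" "hd xs = A" "last xs = B" "set xs \<subseteq> CC"
    and s: "s = sum_list (map (\<lambda>(X, Y). edgew d X Y) (zip xs (tl xs)))" by blast
  let ?T = "{sum_list (map (\<lambda>(X, Y). edgew d X Y) (zip xs (tl xs))) |xs.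
        xs \<noteq> [] \<and> hd xs = f A \<and> last xs = f B \<and> set xs \<subseteq> CC'}"
  have "set (map f xs) \<subseteq> CC'" using xs(4) f by auto
  then have mem: "sum_list (map (\<lambda>(X,Y). edgew d X Y) (zip (map f xs) (tl (map f xs)))) \<in> ?T"
    using xs by (auto simp: hd_map last_map intro!: exI[of _ "map f xs"])
  have bdd: "bdd_below ?T"
    unfolding bdd_below_def using sum_walk_nonneg[OF C' nn] by blast
  have "Inf ?T \<le> sum_list (map (\<lambda>(X,Y). edgew d X Y) (zip (map f xs) (tl (map f xs))))"
    by (rule cInf_lower[OF mem bdd])
  also have "\<dots> \<le> s" unfolding s by (rule sum_walk_mono[OF f ne C' nn xs(4)])
  finally show "Inf ?T \<le> s" .
qed

lemma hedge_rtc_mem: "(hedge d q CC i)\<^sup>*\<^sup>* C D \<Longrightarrow> C \<in> CC \<Longrightarrow> D \<in> CC"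
  by (induction rule: rtranclp_induct) (auto simp: hedge_def)

lemma hedge_rtc_act: "(hedge d q CC i)\<^sup>*\<^sup>* C D \<Longrightarrow> C \<in> CC \<Longrightarrow> i \<le> clvl d q C
   \<Longrightarrow> D \<in> CC \<and> i \<le> clvl d q D"
  by (induction rule: rtranclp_induct) (auto simp: hedge_def)

lemma clus_sub: "C \<in> clus d q i \<Longrightarrow> C \<noteq> {} \<and> C \<subseteq> terms q"
proof (induction i arbitrary: C)
  case 0 thus ?case by auto
next
  case (Suc i)
  show ?case
  proof (cases "i \<le> maxL d q")
    case False with Suc show ?thesis by simp
  next
    case True
    with Suc.prems consider "C \<in> clus d q i"
      | C0 where "C0 \<in> clus d q i" "C = \<Union>{D. (hedge d q (clus d q i) i)\<^sup>*\<^sup>* C0 D}" by auto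
    thus ?thesis
    proof cases
      case 1 with Suc.IH show ?thesis by blast
    next
      case 2
      have "C0 \<subseteq> C" using 2 by blast
      moreover have "C \<subseteq> terms q" using 2 Suc.IH hedge_rtc_mem by blast
      ultimately show ?thesis using Suc.IH 2 by blast
    qed
  qed
qed

lemma clus_nil: "clus d [] i = {}"
  using clus_sub[of _ d "[]" i] by (auto simp: terms_def)

lemma Max_mono2: "finite D \<Longrightarrow> C \<noteq> {} \<Longrightarrow> C \<subseteq> D \<Longrightarrow> (\<forall>v\<in>C. l1 v = l2 v)
   \<Longrightarrow> Max (l1 ` C) \<le> Max (l2 ` D)"
proof -
  assume a: "finite D" "C \<noteq> {}" "C \<subseteq> D" "\<forall>v\<in>C. l1 v = l2 v"
  have "l1 ` C = l2 ` C" using a(4) by auto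
  moreover have "Max (l2 ` C) \<le> Max (l2 ` D)" using a by (intro Max_mono) auto
  ultimately show ?thesis by simp
qed

lemma clvl_le_maxL: "C \<in> clus d q i \<Longrightarrow> clvl d q C \<le> maxL d q"
  unfolding clvl_def maxL_def using clus_sub[of C d q i] finite_terms[of q]
  by (intro Max_mono) auto

lemma clus_Suc_eq: "i \<le> maxL d q \<Longrightarrow> clus d q (Suc i) =
        {C \<in> clus d q i. clvl d q C < i}
        \<union> (\<lambda>C. \<Union>{D. (hedge d q (clus d q i) i)\<^sup>*\<^sup>* C D}) ` {C \<in> clus d q i. i \<le> clvl d q C}"
  by (simp only: clus.simps if_True)

lemma clus_Suc_eq2: "\<not> i \<le> maxL d q \<Longrightarrow> clus d q (Suc i) = clus d q i"
  by (simp only: clus.simps if_False)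

lemma clus_Suc_cover: "D \<in> clus d q i \<Longrightarrow> \<exists>E\<in>clus d q (Suc i). D \<subseteq> E"
proof (cases "i \<le> maxL d q")
  case True
  assume D: "D \<in> clus d q i"
  show ?thesis
  proof (cases "clvl d q D < i")
    case True
    then have "D \<in> clus d q (Suc i)" unfolding clus_Suc_eq[OF \<open>i \<le> maxL d q\<close>] using D by (intro UnI1) simp
    then show ?thesis by blast
  next
    case False
    have "D \<in> {C \<in> clus d q i. i \<le> clvl d q C}" using D False by simp
    hence "(\<lambda>C. \<Union>{D. (hedge d q (clus d q i) i)\<^sup>*\<^sup>* C D}) D \<in> clus d q (Suc i)"
      unfolding clus_Suc_eq[OF \<open>i \<le> maxL d q\<close>] by (intro UnI2 imageI)
    moreover have "D \<subseteq> \<Union>{D'. (hedge d q (clus d q i) i)\<^sup>*\<^sup>* D D'}" by blast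
    ultimately show ?thesis by blast
  qed
next
  case False
  assume "D \<in> clus d q i"
  then show ?thesis unfolding clus_Suc_eq2[OF False] by blast
qed

lemma clus_mono:
  assumes T: "terms qo \<subseteq> terms qn" and L: "\<forall>v\<in>terms qo. lvl d qo v = lvl d qn v"
    and nn: "\<forall>x\<in>terms qn. \<forall>y\<in>terms qn. 0 \<le> d x y"
  shows "refines (clus d qo i) (clus d qn i)"
proof (induction i)
  case 0 show ?case using T by (auto simp: refines_def)
next
  case (Suc i)
  define f where "f X = (SOME D. D \<in> clus d qn i \<and> X \<subseteq> D)" for X
  have f: "\<forall>X\<in>clus d qo i. f X \<in> clus d qn i \<and> X \<subseteq> f X"
  proof
    fix X assume "X \<in> clus d qo i"
    then have "\<exists>D. D \<in> clus d qn i \<and> X \<subseteq> D" using Suc.IH unfolding refines_def by blast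
    then show "f X \<in> clus d qn i \<and> X \<subseteq> f X" unfolding f_def by (rule someI_ex)
  qed
  have act: "clvl d qo X \<le> clvl d qn (f X)" if X: "X \<in> clus d qo i" for X
  proof -
    have "f X \<subseteq> terms qn" "X \<noteq> {}" "X \<subseteq> terms qo" "X \<subseteq> f X" using clus_sub f X by blast+
    moreover have "finite (f X)" using calculation(1) finite_subset finite_terms by blast
    ultimately show ?thesis unfolding clvl_def using L
      by (intro Max_mono2) auto
  qed
  have hm: "f C1 = f C2 \<or> hedge d qn (clus d qn i) i (f C1) (f C2)"
    if h: "hedge d qo (clus d qo i) i C1 C2" for C1 C2
  proof -
    have h': "C1 \<in> clus d qo i" "C2 \<in> clus d qo i" "i \<le> clvl d qo C1" "i \<le> clvl d qo C2"
      "cdist d (clus d qo i) C1 C2 < 2 ^ Suc i" using h unfolding hedge_def by blast+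
    have c1: "\<forall>X\<in>clus d qo i. X \<noteq> {}" using clus_sub by blast
    have c2: "\<forall>Y\<in>clus d qn i. Y \<noteq> {} \<and> Y \<subseteq> terms qn" using clus_sub by blast
    have "cdist d (clus d qn i) (f C1) (f C2) \<le> cdist d (clus d qo i) C1 C2"
      by (rule cdist_mono[OF f c1 c2 nn h'(1,2)])
    then have "cdist d (clus d qn i) (f C1) (f C2) < 2 ^ Suc i" using h'(5) by linarith
    moreover have "i \<le> clvl d qn (f C1)" "i \<le> clvl d qn (f C2)"
      using act[OF h'(1)] act[OF h'(2)] h'(3,4) by linarith+
    moreover have "f C1 \<in> clus d qn i" "f C2 \<in> clus d qn i" using f h'(1,2) by blast+
    ultimately show ?thesis unfolding hedge_def by blast
  qed
  have rtc: "(hedge d qn (clus d qn i) i)\<^sup>*\<^sup>* (f C0) (f C)"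
    if "(hedge d qo (clus d qo i) i)\<^sup>*\<^sup>* C0 C" for C0 C
    using that
  proof (induction rule: rtranclp_induct)
    case (step y z)
    show ?case
    proof (cases "f y = f z")
      case True then show ?thesis using step(3) by simp
    next
      case False
      then have "hedge d qn (clus d qn i) i (f y) (f z)" using hm[OF step(2)] by blast
      then show ?thesis using step(3) by (rule rtranclp.rtrancl_into_rtrancl[rotated])
    qed
  qed (rule rtranclp.rtrancl_refl)
  show ?case unfolding refines_def
  proof
    fix C assume C: "C \<in> clus d qo (Suc i)"
    have simple: "\<exists>D\<in>clus d qn (Suc i). C \<subseteq> D" if "C \<in> clus d qo i"
    proof -
      have D: "f C \<in> clus d qn i" "C \<subseteq> f C" using that f by simp_all
      obtain E where "E \<in> clus d qn (Suc i)" "f C \<subseteq> E" using clus_Suc_cover[OF D(1)] by (elim bexE)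
      with D(2) show ?thesis by blast
    qed
    show "\<exists>D\<in>clus d qn (Suc i). C \<subseteq> D"
    proof (cases "i \<le> maxL d qo")
      case False
      from C have "C \<in> clus d qo i" unfolding clus_Suc_eq2[OF False] .
      then show ?thesis by (rule simple)
    next
      case True
      have "C \<in> {C \<in> clus d qo i. clvl d qo C < i}
        \<union> (\<lambda>C. \<Union>{D. (hedge d qo (clus d qo i) i)\<^sup>*\<^sup>* C D}) ` {C \<in> clus d qo i. i \<le> clvl d qo C}"
        using C unfolding clus_Suc_eq[OF True] .
      then consider "C \<in> clus d qo i"
        | C0 where "C0 \<in> clus d qo i" "i \<le> clvl d qo C0"
            "C = \<Union>{D. (hedge d qo (clus d qo i) i)\<^sup>*\<^sup>* C0 D}" by blast
      then show ?thesis
      proof cases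
        case 1 then show ?thesis using simple by blast
      next
        case 2
        have a: "i \<le> clvl d qn (f C0)" using act[OF 2(1)] 2 by linarith
        have fC0: "f C0 \<in> clus d qn i" using f 2(1) by simp
        have mx: "i \<le> maxL d qn" using a clvl_le_maxL[OF fC0] by linarith
        have mem: "f C0 \<in> {C \<in> clus d qn i. i \<le> clvl d qn C}" using a fC0 by simp
        have E: "\<Union>{D. (hedge d qn (clus d qn i) i)\<^sup>*\<^sup>* (f C0) D} \<in> clus d qn (Suc i)"
          unfolding clus_Suc_eq[OF mx] using mem by (intro UnI2 imageI)
        have "C \<subseteq> \<Union>{D. (hedge d qn (clus d qn i) i)\<^sup>*\<^sup>* (f C0) D}"
        proof
          fix x assume "x \<in> C"
          then obtain C' where C': "(hedge d qo (clus d qo i) i)\<^sup>*\<^sup>* C0 C'" "x \<in> C'" using 2 by blast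
          moreover have "C' \<in> clus d qo i" using hedge_rtc_mem[OF C'(1) 2(1)] .
          ultimately have "x \<in> f C'" "(hedge d qn (clus d qn i) i)\<^sup>*\<^sup>* (f C0) (f C')"
            using rtc[OF C'(1)] f by auto
          then show "x \<in> \<Union>{D. (hedge d qn (clus d qn i) i)\<^sup>*\<^sup>* (f C0) D}" by blast
        qed
        with E show ?thesis by blast
      qed
    qed
  qed
qed

lemma lvl_take:
  assumes dist: "distinct (concat (map (\<lambda>(u,v). [u,v]) ps))" and k: "Suc k \<le> length ps"
    and v: "v \<in> terms (take k ps)"
  shows "lvl d (take k ps) v = lvl d (take (Suc k) ps) v"
proof -
  obtain a b where ab: "ps ! k = (a, b)" by (cases "ps ! k")
  have tk: "take (Suc k) ps = take k ps @ [(a,b)]" using k ab by (simp add: take_Suc_conv_app_nth)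
  have "distinct (concat (map (\<lambda>(u,v). [u,v]) (take (Suc k) ps)))"
    using dist by (metis append_take_drop_id concat_append distinct_append map_append)
  hence "distinct (concat (map (\<lambda>(u,v). [u,v]) (take k ps)) @ [a, b])" by (simp add: tk)
  hence "v \<noteq> a" "v \<noteq> b" using v by (auto simp: terms_conv)
  hence "\<And>w. ((v,w) \<in> set (take (Suc k) ps) \<or> (w,v) \<in> set (take (Suc k) ps))
     = ((v,w) \<in> set (take k ps) \<or> (w,v) \<in> set (take k ps))" by (auto simp: tk)
  thus ?thesis by (simp add: lvl_def mate_def)
qed

lemma main:
  assumes T: "terms qo \<subseteq> terms qn" and L: "\<forall>v\<in>terms qo. lvl d qo v = lvl d qn v"
    and nn: "\<forall>x\<in>terms qn. \<forall>y\<in>terms qn. 0 \<le> d x y"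
    and Fsf: "spanning_forest (Hverts d qo i) (Hedges d qo i) Fo"
    and Isf: "spanning_forest (Hverts d qn i) inhE Fi"
    and inhE: "inhE = {{D1, D2} | C1 C2 D1 D2. {C1, C2} \<in> Fo
      \<and> D1 \<in> clus d qn i \<and> D2 \<in> clus d qn i \<and> C1 \<subseteq> D1 \<and> C2 \<subseteq> D2 \<and> D1 \<noteq> D2}"
  shows "refines (clus d qo (Suc i)) ({C \<in> clus d qn i. clvl d qn C < i}
     \<union> (\<lambda>C. \<Union>{D \<in> Hverts d qn i. econn Fi C D}) ` Hverts d qn i)" (is "refines _ ?R")
proof -
  define f where "f X = (SOME D. D \<in> clus d qn i \<and> X \<subseteq> D)" for X
  have ref: "refines (clus d qo i) (clus d qn i)" by (rule clus_mono[OF T L nn])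
  have f: "\<forall>X\<in>clus d qo i. f X \<in> clus d qn i \<and> X \<subseteq> f X"
  proof
    fix X assume X: "X \<in> clus d qo i"
    have "\<exists>D\<in>clus d qn i. X \<subseteq> D" using ref X unfolding refines_def by (rule bspec)
    then have "\<exists>D. D \<in> clus d qn i \<and> X \<subseteq> D" by blast
    then show "f X \<in> clus d qn i \<and> X \<subseteq> f X" unfolding f_def by (rule someI_ex)
  qed
  have act: "clvl d qo X \<le> clvl d qn (f X)" if X: "X \<in> clus d qo i" for X
  proof -
    have "f X \<subseteq> terms qn" "X \<noteq> {}" "X \<subseteq> terms qo" "X \<subseteq> f X"
      using clus_sub[OF X] clus_sub[of "f X" d qn i] f X by simp_all
    moreover have "finite (f X)" using calculation(1) finite_subset finite_terms by blast
    ultimately show ?thesis unfolding clvl_def using L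
      by (intro Max_mono2) auto
  qed
  have HV: "f X \<in> Hverts d qn i" if X: "X \<in> clus d qo i" "i \<le> clvl d qo X" for X
  proof -
    have a: "i \<le> clvl d qn (f X)" using act[OF X(1)] X(2) by linarith
    have fX: "f X \<in> clus d qn i" using f X(1) by simp
    have "i \<le> maxL d qn" using a clvl_le_maxL[OF fX] by linarith
    then show ?thesis using a fX by (simp add: Hverts_def)
  qed
  have cover: "\<exists>E\<in>?R. D \<subseteq> E" if D: "D \<in> clus d qn i" for D
  proof (cases "clvl d qn D < i")
    case True
    then have "D \<in> ?R" using D by (intro UnI1 CollectI conjI)
    then show ?thesis by blast
  next
    case False
    hence HD: "D \<in> Hverts d qn i" using D clvl_le_maxL[OF D] by (simp add: Hverts_def)
    have "econn Fi D D" by (simp add: econn_def)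
    then have "D \<subseteq> \<Union>{D' \<in> Hverts d qn i. econn Fi D D'}" using HD by blast
    moreover have "\<Union>{D' \<in> Hverts d qn i. econn Fi D D'} \<in> ?R" using HD by (intro UnI2 imageI)
    ultimately show ?thesis by blast
  qed
  have simple: "\<exists>E\<in>?R. C \<subseteq> E" if C: "C \<in> clus d qo i" for C
  proof -
    have D: "f C \<in> clus d qn i" "C \<subseteq> f C" using C f by simp_all
    obtain E where "E \<in> ?R" "f C \<subseteq> E" using cover[OF D(1)] by (elim bexE)
    with D(2) show ?thesis by blast
  qed
  have Fo_sub: "Fo \<subseteq> Hedges d qo i" using Fsf by (simp add: spanning_forest_def)
  have Fsf_conn: "\<forall>x\<in>Hverts d qo i. \<forall>y\<in>Hverts d qo i. econn (Hedges d qo i) x y \<longrightarrow> econn Fo x y"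
    using Fsf by (simp add: spanning_forest_def)
  have Isf_conn: "\<forall>x\<in>Hverts d qn i. \<forall>y\<in>Hverts d qn i. econn inhE x y \<longrightarrow> econn Fi x y"
    using Isf by (simp add: spanning_forest_def)
  show ?thesis unfolding refines_def
  proof
    fix C assume C: "C \<in> clus d qo (Suc i)"
    show "\<exists>E\<in>?R. C \<subseteq> E"
    proof (cases "i \<le> maxL d qo")
      case False
      from C have "C \<in> clus d qo i" unfolding clus_Suc_eq2[OF False] .
      then show ?thesis by (rule simple)
    next
      case True
      have "C \<in> {C \<in> clus d qo i. clvl d qo C < i}
        \<union> (\<lambda>C. \<Union>{D. (hedge d qo (clus d qo i) i)\<^sup>*\<^sup>* C D}) ` {C \<in> clus d qo i. i \<le> clvl d qo C}"
        using C unfolding clus_Suc_eq[OF True] .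
      then consider "C \<in> clus d qo i"
        | C0 where "C0 \<in> clus d qo i" "i \<le> clvl d qo C0"
            "C = \<Union>{D. (hedge d qo (clus d qo i) i)\<^sup>*\<^sup>* C0 D}" by blast
      then show ?thesis
      proof cases
        case 1 then show ?thesis by (rule simple)
      next
        case 2
        have HVo: "Hverts d qo i = {C \<in> clus d qo i. i \<le> clvl d qo C}" using True by (simp add: Hverts_def)
        have HEo: "Hedges d qo i = {{C1, C2} | C1 C2. hedge d qo (clus d qo i) i C1 C2}"
          using True by (simp add: Hedges_def)
        have edge_act: "y \<in> clus d qo i \<and> i \<le> clvl d qo y" if "{y, z} \<in> Fo" for y z
        proof -
          have "{y, z} \<in> Hedges d qo i" using that Fo_sub by blast
          then have "\<exists>C1 C2. {y,z} = {C1,C2} \<and> hedge d qo (clus d qo i) i C1 C2"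
            unfolding HEo mem_Collect_eq .
          then obtain C1 C2 where e: "{y,z} = {C1,C2}" "hedge d qo (clus d qo i) i C1 C2"
            by (elim exE conjE)
          have "y \<in> {C1,C2}" using e(1) by (metis insertI1)
          then have "y = C1 \<or> y = C2" by blast
          then show ?thesis using e(2) unfolding hedge_def by blast
        qed
        have k1: "econn (Hedges d qo i) C0 C'" if "(hedge d qo (clus d qo i) i)\<^sup>*\<^sup>* C0 C'" for C'
          using that unfolding econn_def
        proof (induction rule: rtranclp_induct)
          case (step y z)
          have "{y, z} \<in> Hedges d qo i" unfolding HEo mem_Collect_eq
            using step(2) by (intro exI[of _ y] exI[of _ z] conjI refl)
          then show ?case using step(3) by (rule rtranclp.rtrancl_into_rtrancl[rotated])
        qed (rule rtranclp.rtrancl_refl)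
        have k3: "econn Fi (f C0) (f C')" if "econn Fo C0 C'" for C'
          using that unfolding econn_def
        proof (induction rule: rtranclp_induct)
          case (step y z)
          have y: "y \<in> clus d qo i" "i \<le> clvl d qo y" using edge_act[OF step(2)] by simp_all
          have "{z, y} \<in> Fo" using step(2) by (simp add: insert_commute)
          then have z: "z \<in> clus d qo i" "i \<le> clvl d qo z" using edge_act by simp_all
          have "(\<lambda>x y. {x, y} \<in> Fi)\<^sup>*\<^sup>* (f y) (f z)"
          proof (cases "f y = f z")
            case False
            have fy: "f y \<in> clus d qn i" "y \<subseteq> f y" using f y(1) by simp_all
            have fz: "f z \<in> clus d qn i" "z \<subseteq> f z" using f z(1) by simp_all
            have "{f y, f z} \<in> inhE" unfolding inhE mem_Collect_eq
              using step(2) fy fz False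
              by (intro exI[of _ y] exI[of _ z] exI[of _ "f y"] exI[of _ "f z"] conjI refl)
            hence "econn inhE (f y) (f z)" unfolding econn_def by (rule r_into_rtranclp)
            then have "econn Fi (f y) (f z)" using Isf_conn HV[OF y] HV[OF z] by blast
            then show ?thesis unfolding econn_def .
          qed simp
          then show ?case using step(3) by (rule rtranclp_trans[rotated])
        qed (rule rtranclp.rtrancl_refl)
        have a: "f C0 \<in> Hverts d qn i" using HV[OF 2(1,2)] .
        have "C \<subseteq> \<Union>{D \<in> Hverts d qn i. econn Fi (f C0) D}"
        proof
          fix x assume "x \<in> C"
          then obtain C' where C': "(hedge d qo (clus d qo i) i)\<^sup>*\<^sup>* C0 C'" "x \<in> C'" using 2 by blast
          have C'a: "C' \<in> clus d qo i \<and> i \<le> clvl d qo C'" using hedge_rtc_act[OF C'(1) 2(1,2)] .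
          have h0: "C0 \<in> Hverts d qo i" "C' \<in> Hverts d qo i" using HVo 2 C'a by simp_all
          have "econn Fo C0 C'" using Fsf_conn h0 k1[OF C'(1)] by blast
          then have "econn Fi (f C0) (f C')" by (rule k3)
          moreover have "x \<in> f C'" using f C'a C'(2) by blast
          moreover have "f C' \<in> Hverts d qn i" using HV C'a by blast
          ultimately show "x \<in> \<Union>{D \<in> Hverts d qn i. econn Fi (f C0) D}" by blast
        qed
        moreover have "\<Union>{D \<in> Hverts d qn i. econn Fi (f C0) D} \<in> ?R"
          using a by (intro UnI2 imageI)
        ultimately show ?thesis by blast
      qed
    qed
  qed
qed

lemma terms_take_sub: "terms (take n ps) \<subseteq> terms ps"
  unfolding terms_def using set_take_subset by (metis SUP_subset_mono order_refl)

theorem lemma4p4: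
  fixes d :: "'a \<Rightarrow> 'a \<Rightarrow> real" and ps :: "('a \<times> 'a) list"
    and F Finh :: "nat \<Rightarrow> nat \<Rightarrow> 'a set set set" and t i :: nat
  assumes distinct_terms: "distinct (concat (map (\<lambda>(u, v). [u, v]) ps))"
    and d_zero: "\<forall>x\<in>terms ps. d x x = 0"
    and d_sym: "\<forall>x\<in>terms ps. \<forall>y\<in>terms ps. d x y = d y x"
    and d_tri: "\<forall>x\<in>terms ps. \<forall>y\<in>terms ps. \<forall>z\<in>terms ps. d x z \<le> d x y + d y z"
    and d_ge1: "\<forall>x\<in>terms ps. \<forall>y\<in>terms ps. x \<noteq> y \<longrightarrow> 1 \<le> d x y"
    and F0: "\<forall>j. F 0 j = {}"
    and Finh_sf: "\<forall>s\<in>{1..length ps}. \<forall>j.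
       spanning_forest (Hverts d (take s ps) j) (inh d ps s j (F (s - 1) j)) (Finh s j)"
    and F_sf: "\<forall>s\<in>{1..length ps}. \<forall>j.
       spanning_forest (Hverts d (take s ps) j) (Hedges d (take s ps) j) (F s j)
       \<and> Finh s j \<subseteq> F s j"
    and t: "1 \<le> t" "t \<le> length ps"
  shows "refines (clus d (take (t - 1) ps) (Suc i)) (cinh d ps t i (Finh t i))"
proof (cases "t = 1")
  case True
  then have "take (t - 1) ps = []" by simp
  then have "clus d (take (t - 1) ps) (Suc i) = {}" by (simp only: clus_nil)
  then show ?thesis unfolding refines_def by (simp only: ball_empty)
next
  case False
  then obtain k where k: "t = Suc k" "1 \<le> k" using t by (cases t) auto
  have T: "terms (take k ps) \<subseteq> terms (take (Suc k) ps)" by (rule terms_take_mono) simp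
  have L: "\<forall>v\<in>terms (take k ps). lvl d (take k ps) v = lvl d (take (Suc k) ps) v"
  proof
    fix v assume v: "v \<in> terms (take k ps)"
    have "Suc k \<le> length ps" using t k by simp
    then show "lvl d (take k ps) v = lvl d (take (Suc k) ps) v" by (rule lvl_take[OF distinct_terms _ v])
  qed
  have nn: "\<forall>x\<in>terms (take (Suc k) ps). \<forall>y\<in>terms (take (Suc k) ps). 0 \<le> d x y"
  proof (intro ballI)
    fix x y assume "x \<in> terms (take (Suc k) ps)" "y \<in> terms (take (Suc k) ps)"
    then have xy: "x \<in> terms ps" "y \<in> terms ps" using terms_take_sub[of "Suc k" ps] by (auto dest: subsetD)
    show "0 \<le> d x y"
    proof (cases "x = y")
      case True then show ?thesis using d_zero xy by simp
    next
      case False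
      then have "1 \<le> d x y" using d_ge1 xy by blast
      then show ?thesis by linarith
    qed
  qed
  have Fsf: "spanning_forest (Hverts d (take k ps) i) (Hedges d (take k ps) i) (F k i)"
  proof -
    have "k \<in> {1..length ps}" using t k by simp
    then show ?thesis using F_sf by blast
  qed
  have Isf: "spanning_forest (Hverts d (take (Suc k) ps) i) (inh d ps (Suc k) i (F k i)) (Finh (Suc k) i)"
  proof -
    have "Suc k \<in> {1..length ps}" using t k by simp
    then show ?thesis using Finh_sf by (metis diff_Suc_1)
  qed
  have "refines (clus d (take k ps) (Suc i)) ({C \<in> clus d (take (Suc k) ps) i. clvl d (take (Suc k) ps) C < i}
     \<union> (\<lambda>C. \<Union>{D \<in> Hverts d (take (Suc k) ps) i. econn (Finh (Suc k) i) C D}) ` Hverts d (take (Suc k) ps) i)"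
    by (rule main[OF T L nn Fsf Isf]) (simp add: inh_def)
  then show ?thesis unfolding cinh_def using k(1) by (simp only: diff_Suc_1)
qed

end
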